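(* For $x_b,x_\theta\in\mathbb{R}$ let $$F(x_b,x_\theta)=\int_{\mathbb{R}}\frac{e^{(y+x_\theta)x_b}-e^{-(y+x_\theta)x_b}}{e^{(y+x_\theta)x_b}+e^{-(y+x_\theta)x_b}}\,(y+x_\theta)\,\phi(y)\,dy.$$ Then for each fixed $x_\theta$, $x_b\mapsto F(x_b,x_\theta)$ is concave on $x_b\ge0$; moreover (i) $F(0,x_\theta)=0$ and (ii) $F(x_\theta,x_\theta)=x_\theta$.
   Context: $\phi$ is the standard normal density. *)

theory Defs
  imports "HOL-Probability.Probability"
begin

definition F :: "real \<Rightarrow> real \<Rightarrow> real" where
  "F xb x\<theta> = (\<integral>y. ((exp ((y + x\<theta>) * xb) - exp (- ((y + x\<theta>) * xb))) /
                       (exp ((y + x\<theta>) * xb) + exp (- ((y + x\<theta>) * xb))))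
                    * (y + x\<theta>) * std_normal_density y \<partial>lborel)"

end

theory Submission
  imports Defs
begin

lemma F_eq: "F b a = (\<integral>y. tanh ((y + a) * b) * (y + a) * std_normal_density y \<partial>lborel)"
  by (simp add: F_def tanh_altdef)

lemma int_lin: "integrable lborel (\<lambda>y. (y + a) * std_normal_density y)"
proof -
  have "integrable lborel (\<lambda>y. std_normal_density y * y ^ 1 + a * std_normal_density y)"
    using integrable_std_normal_moment[of 1] integrable_normal_density[of 1 0]
    by (intro Bochner_Integration.integrable_add integrable_mult_right) auto
  then show ?thesis by (simp add: algebra_simps)
qed

lemma integral_lin: "(\<integral>y. (y + a) * std_normal_density y \<partial>lborel) = a"
proof -
  have "(\<integral>y. (y + a) * std_normal_density y \<partial>lborel)
      = (\<integral>y. std_normal_density y * y ^ (2*0+1) + a * std_normal_density y \<partial>lborel)"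
    by (rule Bochner_Integration.integral_cong) (auto simp: algebra_simps)
  also have "\<dots> = (\<integral>y. std_normal_density y * y ^ (2*0+1) \<partial>lborel) + (\<integral>y. a * std_normal_density y \<partial>lborel)"
    using integrable_std_normal_moment[of 1] integrable_normal_density[of 1 0]
    by (intro Bochner_Integration.integral_add integrable_mult_right) auto
  also have "\<dots> = a"
    using integral_std_normal_moment_odd[of 0] integral_normal_density[of 1 0] by simp
  finally show ?thesis .
qed

lemma int_g: "integrable lborel (\<lambda>y. tanh ((y + a) * b) * (y + a) * std_normal_density y)"
proof (rule Bochner_Integration.integrable_bound[OF int_lin[of a]])
  show "(\<lambda>y. tanh ((y + a) * b) * (y + a) * std_normal_density y) \<in> borel_measurable lborel"
    unfolding tanh_altdef by measurable
  show "AE y in lborel. norm (tanh ((y + a) * b) * (y + a) * std_normal_density y)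
      \<le> norm ((y + a) * std_normal_density y)"
  proof (intro AE_I2)
    fix y
    have "\<bar>tanh ((y + a) * b)\<bar> \<le> 1" using tanh_real_bounds[of "(y+a)*b"] by auto
    then have "\<bar>tanh ((y + a) * b)\<bar> * \<bar>(y + a) * std_normal_density y\<bar> \<le> 1 * \<bar>(y + a) * std_normal_density y\<bar>"
      by (intro mult_right_mono) auto
    then show "norm (tanh ((y + a) * b) * (y + a) * std_normal_density y)
      \<le> norm ((y + a) * std_normal_density y)" by (simp add: abs_mult)
  qed
qed

lemma pw_concave: "concave_on {0..} (\<lambda>b. tanh (w * b) * w)"
  unfolding concave_on_def
proof (rule convex_on_realI[where f' = "\<lambda>b. - (w * w * (1 - tanh (w * b) ^ 2))"])
  show "connected {0::real..}" by simp
  fix b :: real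
  show "((\<lambda>b. - (tanh (w * b) * w)) has_real_derivative - (w * w * (1 - tanh (w * b) ^ 2))) (at b)"
    by (auto intro!: derivative_eq_intros simp: cosh_real_pos[THEN less_imp_neq, symmetric] algebra_simps)
next
  fix b c :: real assume "b \<in> {0..}" "c \<in> {0..}" "b \<le> c"
  then have "\<bar>w * b\<bar> \<le> \<bar>w * c\<bar>" by (simp add: abs_mult mult_left_mono)
  then have "\<bar>tanh (w * b)\<bar> \<le> \<bar>tanh (w * c)\<bar>" by (metis tanh_real_abs tanh_real_le_iff)
  then have "\<bar>tanh (w * b)\<bar>^2 \<le> \<bar>tanh (w * c)\<bar>^2" by (intro power_mono) auto
  then have "tanh (w * b)^2 \<le> tanh (w * c)^2" by simp
  moreover have "0 \<le> w * w" by simp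
  ultimately show "- (w * w * (1 - tanh (w * b) ^ 2)) \<le> - (w * w * (1 - tanh (w * c) ^ 2))"
    by (simp add: mult_left_mono)
qed

lemma F_conc: "concave_on {0..} (\<lambda>b. F b a)"
proof -
  have "\<forall>x\<in>{0::real..}. \<forall>y\<in>{0..}. \<forall>u\<ge>0. \<forall>v\<ge>0. u + v = 1 \<longrightarrow> F (u *\<^sub>R x + v *\<^sub>R y) a \<ge> u * F x a + v * F y a"
  proof (intro ballI allI impI)
    fix x y u v :: real assume xy: "x \<in> {0..}" "y \<in> {0..}" and uv: "u \<ge> 0" "v \<ge> 0" "u + v = 1"
    have "u * F x a + v * F y a = (\<integral>z. u * (tanh ((z + a) * x) * (z + a) * std_normal_density z)
         + v * (tanh ((z + a) * y) * (z + a) * std_normal_density z) \<partial>lborel)"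
      unfolding F_eq using int_g
      by (subst Bochner_Integration.integral_add) (auto intro!: integrable_mult_right)
    also have "\<dots> \<le> (\<integral>z. tanh ((z + a) * (u *\<^sub>R x + v *\<^sub>R y)) * (z + a) * std_normal_density z \<partial>lborel)"
    proof (rule integral_mono)
      show "integrable lborel (\<lambda>z. u * (tanh ((z + a) * x) * (z + a) * std_normal_density z)
         + v * (tanh ((z + a) * y) * (z + a) * std_normal_density z))"
        using int_g by (auto intro!: integrable_mult_right integrable_add)
      show "integrable lborel (\<lambda>z. tanh ((z + a) * (u *\<^sub>R x + v *\<^sub>R y)) * (z + a) * std_normal_density z)"
        by (rule int_g)
      fix z
      have "u = 1 - v" using uv by simp
      have c: "(1 - v) * (tanh ((z + a) * x) * (z + a)) + v * (tanh ((z + a) * y) * (z + a))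
          \<le> tanh ((z + a) * ((1 - v) *\<^sub>R x + v *\<^sub>R y)) * (z + a)"
        using concave_onD[OF pw_concave[of "z + a"], of v x y] xy uv by auto
      have "(u * (tanh ((z + a) * x) * (z + a)) + v * (tanh ((z + a) * y) * (z + a))) * std_normal_density z
          \<le> (tanh ((z + a) * (u *\<^sub>R x + v *\<^sub>R y)) * (z + a)) * std_normal_density z"
        using c uv by (intro mult_right_mono) (auto simp: normal_density_nonneg \<open>u = 1 - v\<close>)
      then show "u * (tanh ((z + a) * x) * (z + a) * std_normal_density z)
         + v * (tanh ((z + a) * y) * (z + a) * std_normal_density z)
         \<le> tanh ((z + a) * (u *\<^sub>R x + v *\<^sub>R y)) * (z + a) * std_normal_density z"
        by (simp add: algebra_simps)
    qed
    also have "\<dots> = F (u *\<^sub>R x + v *\<^sub>R y) a" by (simp add: F_eq)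
    finally show "F (u *\<^sub>R x + v *\<^sub>R y) a \<ge> u * F x a + v * F y a" .
  qed
  then show ?thesis unfolding concave_on_iff by (simp add: convex_real_interval)
qed


lemma phi_shift: "std_normal_density (y + 2 * a) = std_normal_density y * exp (- 2 * ((y + a) * a))"
proof -
  have "- (y + 2 * a)\<^sup>2 / 2 = - y\<^sup>2 / 2 + (- 2 * ((y + a) * a))"
    by (simp add: power2_eq_square field_simps)
  then have "exp (- (y + 2 * a)\<^sup>2 / 2) = exp (- y\<^sup>2 / 2) * exp (- 2 * ((y + a) * a))"
    by (simp only: exp_add)
  then show ?thesis by (simp add: std_normal_density_def)
qed

lemma phi_neg: "std_normal_density (- y) = std_normal_density y"
  by (simp add: std_normal_density_def)

lemma tanh_id: "tanh (t::real) * (1 + exp (- 2 * t)) = 1 - exp (- 2 * t)"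
proof -
  have "1 + exp (- 2 * t) > 0" by (simp add: add_pos_pos)
  then show ?thesis by (simp add: tanh_real_altdef)
qed

lemma pw_id: "tanh ((y + a) * a) * (y + a) * std_normal_density y
   + tanh ((y + a) * a) * (y + a) * std_normal_density (y + 2 * a)
   = (y + a) * std_normal_density y - (y + a) * std_normal_density (y + 2 * a)"
proof -
  have "tanh ((y + a) * a) * (y + a) * std_normal_density y
   + tanh ((y + a) * a) * (y + a) * std_normal_density (y + 2 * a)
   = (tanh ((y + a) * a) * (1 + exp (- 2 * ((y + a) * a)))) * (y + a) * std_normal_density y"
    unfolding phi_shift by (simp add: algebra_simps)
  also have "\<dots> = (1 - exp (- 2 * ((y + a) * a))) * (y + a) * std_normal_density y"
    by (simp only: tanh_id)
  also have "\<dots> = (y + a) * std_normal_density y - (y + a) * std_normal_density (y + 2 * a)"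
    unfolding phi_shift by (simp add: algebra_simps)
  finally show ?thesis .
qed

lemma F_diag: "F a a = a"
proof -
  define G where "G y = tanh ((y + a) * a) * (y + a) * std_normal_density y" for y
  define H where "H y = tanh ((y + a) * a) * (y + a) * std_normal_density (y + 2 * a)" for y
  define K where "K y = (y + a) * std_normal_density (y + 2 * a)" for y
  have iG: "integrable lborel G" unfolding G_def by (rule int_g)
  have GH: "G (- 2 * a + (-1) * y) = H y" for y
  proof -
    have e1: "- (y + 2 * a) + a = - (y + a)" and e2: "- 2 * a + (-1) * y = - (y + 2 * a)" by simp_all
    show ?thesis unfolding G_def H_def e2 e1
      by (simp only: phi_neg mult_minus_left tanh_minus minus_mult_minus)
  qed
  have iH: "integrable lborel H"
    using lborel_integrable_real_affine[OF iG, of "-1" "- 2 * a"] GH by simp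
  have IGH: "integral\<^sup>L lborel G = integral\<^sup>L lborel H"
    using lborel_integral_real_affine[of "-1" G "- 2 * a"] GH by simp
  have KK: "K (- 2 * a + 1 * y) = (y + (- a)) * std_normal_density y" for y
    unfolding K_def by (simp add: algebra_simps)
  have iK: "integrable lborel K"
    using lborel_integrable_real_affine_iff[of 1 K "- 2 * a"] KK int_lin[of "-a"] by simp
  have IK: "integral\<^sup>L lborel K = - a"
    using lborel_integral_real_affine[of 1 K "- 2 * a"] KK integral_lin[of "-a"] by simp
  have "2 * F a a = integral\<^sup>L lborel G + integral\<^sup>L lborel H"
    using IGH by (simp add: F_eq G_def[abs_def])
  also have "\<dots> = (\<integral>y. G y + H y \<partial>lborel)"
    using iG iH by simp
  also have "\<dots> = (\<integral>y. (y + a) * std_normal_density y - K y \<partial>lborel)"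
    unfolding G_def H_def K_def by (simp only: pw_id)
  also have "\<dots> = (\<integral>y. (y + a) * std_normal_density y \<partial>lborel) - integral\<^sup>L lborel K"
    using int_lin iK by simp
  also have "\<dots> = 2 * a" using integral_lin IK by simp
  finally show ?thesis by simp
qed

theorem lemma19:
  fixes x\<theta> :: real
  shows "concave_on {0..} (\<lambda>xb. F xb x\<theta>) \<and> F 0 x\<theta> = 0 \<and> F x\<theta> x\<theta> = x\<theta>"
  using F_conc[of x\<theta>] F_diag[of x\<theta>] by (simp add: F_eq)

end
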